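(* Let $d$ be a circular design with $t$ treatments and $b$ blocks of length $k$. (i) If $l^*$ maximizes $c(l)$ over all sequences $l$ of length $k$ with entries in $\{1,\dots,t\}$, then under model $(\mathcal{M}1)$, $\mathrm{tr}(C_d[\phi])\le b\,c(l^* )$. (ii) If $l^*$ maximizes $\tilde c(l)$ over all such sequences, then under model $(\mathcal{M}2)$, $\mathrm{tr}(C_d[\psi])\le b\,\tilde c(l^* )$.
   Context: Designs: $t$ treatments, $b$ linear blocks; block $i$ has inner plots $j=1,\dots,k$ and border plots $j=0,k+1$; $d(i,j)$ is the treatment on plot $(i,j)$, and circularity means $d(i,0)=d(i,k)$, $d(i,k+1)=d(i,1)$. Responses $Y_{i,j}$ ($1\le i\le b$, $1\le j\le k$) are uncorrelated with common variance. Model $(\mathcal{M}1)$: $\mathbb{E}(Y)=B\beta+T_d\tau+L_d\lambda$; model $(\mathcal{M}2)$: $\mathbb{E}(Y)=B\beta+T_d\tau+L_d\lambda+R_d\rho$, where $B$ is the block incidence matrix and $T_d,L_d,R_d$ ($bk\times t$) have in row $(i,j)$ a single $1$ in column $d(i,j)$, $d(i,j-1)$, $d(i,j+1)$ respectively. Total effects: $\phi=\tau+\lambda$ in $(\mathcal{M}1)$, $\psi=\tau+\lambda+\rho$ in $(\mathcal{M}2)$; these equal $K'\alpha$ with $\alpha=(\tau',\lambda')'$, $K=\mathbf{1}_2\otimes I_t$, $A=(T_d\mid L_d)$, respectively $\alpha=(\tau',\lambda',\rho')'$, $K=\mathbf 1_3\otimes I_t$, $A=(T_d\mid L_d\mid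 R_d)$. Information matrix: with $A^+$ the Moore–Penrose inverse, $\mathrm{pr}_{(X)}=X(X'X)^+X'$, $\mathrm{pr}^\perp_{(X)}=I-\mathrm{pr}_{(X)}$, $M=I-K(K'K)^+K'$, $X_1=AK(K'K)^+$, $X_2=(AM\mid B)$, the information matrix for $K'\alpha$ is $X_1'\mathrm{pr}^\perp_{(X_2)}X_1$; this gives $C_d[\phi]$ and $C_d[\psi]$. For a sequence $l=(l_1,\dots,l_k)$ with entries in $\{1,\dots,t\}$, put $l_0=l_k$, $l_{k+1}=l_1$; $n_i$ = number of occurrences of $i$ in $l$; $m_i$ = number of $j\in\{1,\dots,k\}$ with $l_{j-1}=l_j=i$; $p_i$ = number of $j\in\{1,\dots,k\}$ with $l_{j-1}=l_{j+1}=i$. Define $c(l)=\frac12\big(k-\frac2k\sum_i n_i^2+\sum_i m_i\big)$ and $\tilde c(l)=\frac19\big(3k-\frac9k\sum_i n_i^2+4\sum_i m_i+2\sum_i p_i\big)$. *)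

theory Defs
  imports "Jordan_Normal_Form.Matrix"
begin

definition mtrace :: "real mat \<Rightarrow> real" where
  "mtrace A = (\<Sum>i<dim_row A. A $$ (i,i))"

text \<open>Moore-Penrose inverse, defined by the four Penrose conditions (it exists and is unique).\<close>
definition mp_inverse :: "real mat \<Rightarrow> real mat" where
  "mp_inverse A = (THE G. G \<in> carrier_mat (dim_col A) (dim_row A) \<and>
      A * G * A = A \<and> G * A * G = G \<and>
      transpose_mat (A * G) = A * G \<and> transpose_mat (G * A) = G * A)"

definition hcat :: "real mat \<Rightarrow> real mat \<Rightarrow> real mat" where
  "hcat X Y = mat (dim_row X) (dim_col X + dim_col Y)
     (\<lambda>(i,j). if j < dim_col X then X $$ (i,j) else Y $$ (i, j - dim_col X))"

definition proj :: "real mat \<Rightarrow> real mat" where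
  "proj X = X * mp_inverse (transpose_mat X * X) * transpose_mat X"

definition proj_perp :: "real mat \<Rightarrow> real mat" where
  "proj_perp X = 1\<^sub>m (dim_row X) - proj X"

text \<open>Information matrix for K'alpha in the model E(Y) = B beta + A alpha.\<close>
definition info_mat :: "real mat \<Rightarrow> real mat \<Rightarrow> real mat \<Rightarrow> real mat" where
  "info_mat A B K =
     (let KK = mp_inverse (transpose_mat K * K);
          M = 1\<^sub>m (dim_row K) - K * KK * transpose_mat K;
          X1 = A * K * KK;
          X2 = hcat (A * M) B
      in transpose_mat X1 * proj_perp X2 * X1)"

text \<open>Blocks i \<in> {0..<b}, inner plots j \<in> {0..<k}, treatments {0..<t}.
  Observation (i,j) is row i*k+j. Circularity: left neighbour of plot j is
  plot (j+k-1) mod k, right neighbour is (j+1) mod k.\<close>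

definition is_design :: "nat \<Rightarrow> nat \<Rightarrow> nat \<Rightarrow> (nat \<Rightarrow> nat \<Rightarrow> nat) \<Rightarrow> bool" where
  "is_design t b k d \<longleftrightarrow> (\<forall>i<b. \<forall>j<k. d i j < t)"

definition block_mat :: "nat \<Rightarrow> nat \<Rightarrow> real mat" where
  "block_mat b k = mat (b*k) b (\<lambda>(r,c). if r div k = c then 1 else 0)"

definition T_mat :: "nat \<Rightarrow> nat \<Rightarrow> nat \<Rightarrow> (nat \<Rightarrow> nat \<Rightarrow> nat) \<Rightarrow> real mat" where
  "T_mat t b k d = mat (b*k) t (\<lambda>(r,c). if d (r div k) (r mod k) = c then 1 else 0)"

definition L_mat :: "nat \<Rightarrow> nat \<Rightarrow> nat \<Rightarrow> (nat \<Rightarrow> nat \<Rightarrow> nat) \<Rightarrow> real mat" where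
  "L_mat t b k d = mat (b*k) t
     (\<lambda>(r,c). if d (r div k) ((r mod k + k - 1) mod k) = c then 1 else 0)"

definition R_mat :: "nat \<Rightarrow> nat \<Rightarrow> nat \<Rightarrow> (nat \<Rightarrow> nat \<Rightarrow> nat) \<Rightarrow> real mat" where
  "R_mat t b k d = mat (b*k) t
     (\<lambda>(r,c). if d (r div k) ((r mod k + 1) mod k) = c then 1 else 0)"

text \<open>K = 1_m \<otimes> I_t.\<close>
definition K_mat :: "nat \<Rightarrow> nat \<Rightarrow> real mat" where
  "K_mat m t = mat (m*t) t (\<lambda>(r,c). if r mod t = c then 1 else 0)"

definition C_phi :: "nat \<Rightarrow> nat \<Rightarrow> nat \<Rightarrow> (nat \<Rightarrow> nat \<Rightarrow> nat) \<Rightarrow> real mat" where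
  "C_phi t b k d = info_mat (hcat (T_mat t b k d) (L_mat t b k d)) (block_mat b k) (K_mat 2 t)"

definition C_psi :: "nat \<Rightarrow> nat \<Rightarrow> nat \<Rightarrow> (nat \<Rightarrow> nat \<Rightarrow> nat) \<Rightarrow> real mat" where
  "C_psi t b k d = info_mat (hcat (hcat (T_mat t b k d) (L_mat t b k d)) (R_mat t b k d))
      (block_mat b k) (K_mat 3 t)"

text \<open>A sequence l = (l_1..l_k) is a list of length k (0-indexed), entries in {0..<t};
  l_0 = l_k and l_{k+1} = l_1, i.e. cyclic neighbours.\<close>

definition is_seq :: "nat \<Rightarrow> nat \<Rightarrow> nat list \<Rightarrow> bool" where
  "is_seq t k l \<longleftrightarrow> length l = k \<and> set l \<subseteq> {..<t}"

definition seq_n :: "nat list \<Rightarrow> nat \<Rightarrow> nat" where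
  "seq_n l i = card {j. j < length l \<and> l ! j = i}"

definition seq_m :: "nat list \<Rightarrow> nat \<Rightarrow> nat" where
  "seq_m l i = card {j. j < length l \<and>
      l ! ((j + length l - 1) mod length l) = i \<and> l ! j = i}"

definition seq_p :: "nat list \<Rightarrow> nat \<Rightarrow> nat" where
  "seq_p l i = card {j. j < length l \<and>
      l ! ((j + length l - 1) mod length l) = i \<and> l ! ((j + 1) mod length l) = i}"

definition c_fun :: "nat \<Rightarrow> nat list \<Rightarrow> real" where
  "c_fun t l = (let k = real (length l) in
     (1/2) * (k - (2/k) * (\<Sum>i<t. real (seq_n l i)^2) + (\<Sum>i<t. real (seq_m l i))))"

definition ctilde_fun :: "nat \<Rightarrow> nat list \<Rightarrow> real" where
  "ctilde_fun t l = (let k = real (length l) in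
     (1/9) * (3*k - (9/k) * (\<Sum>i<t. real (seq_n l i)^2)
              + 4 * (\<Sum>i<t. real (seq_m l i)) + 2 * (\<Sum>i<t. real (seq_p l i))))"

end

theory Submission
  imports Defs
begin

lemma tr_mult[simp]: "dim_col (A::real mat) = dim_row B \<Longrightarrow> transpose_mat (A*B) = transpose_mat B * transpose_mat A"
  by (rule transpose_mult[of A "dim_row A" "dim_col A" B "dim_col B"], auto)

lemma massoc[simp]: "dim_col (A::real mat) = dim_row B \<Longrightarrow> dim_col B = dim_row C \<Longrightarrow> A*B*C = A*(B*C)"
  by (rule assoc_mult_mat[of A "dim_row A" "dim_col A" B "dim_col B" C "dim_col C"], auto)

lemma penrose_unique:
  fixes A G1 G2 :: "real mat"
  assumes A: "A \<in> carrier_mat m n" and G1: "G1 \<in> carrier_mat n m" and G2: "G2 \<in> carrier_mat n m"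
  and a1: "A*G1*A = A" and b1: "G1*A*G1 = G1" and c1: "transpose_mat (A*G1) = A*G1" and d1: "transpose_mat (G1*A) = G1*A"
  and a2: "A*G2*A = A" and b2: "G2*A*G2 = G2" and c2: "transpose_mat (A*G2) = A*G2" and d2: "transpose_mat (G2*A) = G2*A"
  shows "G1 = G2"
proof -
  note D = carrier_matD[OF A] carrier_matD[OF G1] carrier_matD[OF G2]
  have "G1 = G1*(A*G1)" using b1 D by simp
  also have "\<dots> = G1*transpose_mat (A*G1)" using c1 by simp
  also have "\<dots> = G1*(transpose_mat G1*transpose_mat A)" using D by simp
  also have "\<dots> = G1*(transpose_mat G1*transpose_mat (A*G2*A))" using a2 by simp
  also have "\<dots> = G1*(transpose_mat (A*G1)*transpose_mat (A*G2))" using D by simp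
  also have "\<dots> = G1*(A*G1)*(A*G2)" using c1 c2 D by simp
  also have "\<dots> = (G1*A*G1)*A*G2" using D by simp
  also have "\<dots> = G1*A*G2" using b1 by simp
  finally have e1: "G1 = G1*A*G2" .
  have "G2 = (G2*A)*G2" using b2 D by simp
  also have "\<dots> = transpose_mat (G2*A)*G2" using d2 by simp
  also have "\<dots> = (transpose_mat A*transpose_mat G2)*G2" using D by simp
  also have "\<dots> = (transpose_mat (A*G1*A)*transpose_mat G2)*G2" using a1 by simp
  also have "\<dots> = (transpose_mat (G1*A)*transpose_mat (G2*A))*G2" using D by simp
  also have "\<dots> = (G1*A)*(G2*A)*G2" using d1 d2 by simp
  also have "\<dots> = G1*A*(G2*A*G2)" using D by simp
  also have "\<dots> = G1*A*G2" using b2 by simp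
  finally show ?thesis using e1 by simp
qed

lemma madd_r: "dim_col (A::real mat) = dim_row B \<Longrightarrow> dim_row B = dim_row C \<Longrightarrow> dim_col B = dim_col C \<Longrightarrow> A*(B+C) = A*B + A*C"
  by (rule mult_add_distrib_mat[of A "dim_row A" "dim_col A" B "dim_col B"], auto)
lemma madd_l: "dim_row (A::real mat) = dim_row B \<Longrightarrow> dim_col A = dim_col B \<Longrightarrow> dim_col A = dim_row C \<Longrightarrow> (A+B)*C = A*C+B*C"
  by (rule add_mult_distrib_mat[of A "dim_row A" "dim_col A" B C "dim_col C"], auto)
lemma msub_r: "dim_col (A::real mat) = dim_row B \<Longrightarrow> dim_row B = dim_row C \<Longrightarrow> dim_col B = dim_col C \<Longrightarrow> A*(B-C) = A*B - A*C"
  by (rule mult_minus_distrib_mat[of A "dim_row A" "dim_col A" B "dim_col B"], auto)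
lemma msub_l: "dim_row (A::real mat) = dim_row B \<Longrightarrow> dim_col A = dim_col B \<Longrightarrow> dim_col A = dim_row C \<Longrightarrow> (A-B)*C = A*C-B*C"
  by (rule minus_mult_distrib_mat[of A "dim_row A" "dim_col A" B C "dim_col C"], auto)
lemma msm_r[simp]: "dim_col (A::real mat) = dim_row B \<Longrightarrow> A*(a \<cdot>\<^sub>m B) = a \<cdot>\<^sub>m (A*B)"
  by (rule eq_matI, auto)
lemma msm_l[simp]: "dim_col (A::real mat) = dim_row B \<Longrightarrow> (a \<cdot>\<^sub>m A)*B = a \<cdot>\<^sub>m (A*B)"
  by (rule eq_matI, auto)
lemma tr_sm[simp]: "transpose_mat (a \<cdot>\<^sub>m (A::real mat)) = a \<cdot>\<^sub>m transpose_mat A"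
  by (rule eq_matI, auto)
lemma tr_add[simp]: "dim_row (A::real mat) = dim_row B \<Longrightarrow> dim_col A = dim_col B \<Longrightarrow> transpose_mat (A+B) = transpose_mat A + transpose_mat B"
  by (rule eq_matI, auto)
lemma tr_sub[simp]: "dim_row (A::real mat) = dim_row B \<Longrightarrow> dim_col A = dim_col B \<Longrightarrow> transpose_mat (A-B) = transpose_mat A - transpose_mat B"
  by (rule eq_matI, auto)

lemma sm_sm[simp]: "a \<cdot>\<^sub>m (b \<cdot>\<^sub>m (A::real mat)) = (a*b) \<cdot>\<^sub>m A"
  by (rule eq_matI, auto)
lemma sm_one[simp]: "1 \<cdot>\<^sub>m (A::real mat) = A"
  by (rule eq_matI, auto)

lemma sub_add_cancel_mat[simp]: "dim_row (A::real mat) = dim_row B \<Longrightarrow> dim_col A = dim_col B \<Longrightarrow> A - B + B = A"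
  by (rule eq_matI, auto)

definition ecol :: "nat \<Rightarrow> nat \<Rightarrow> real mat" where
  "ecol N j = mat N 1 (\<lambda>(r,_). if r = j then 1 else 0)"

lemma ecol_dim[simp]: "dim_row (ecol N j) = N" "dim_col (ecol N j) = 1"
  by (auto simp: ecol_def)

lemma mult_11: assumes "dim_col (c::real mat) = 1" "u \<in> carrier_mat 1 1"
  shows "c * u = (u $$ (0,0)) \<cdot>\<^sub>m c"
  using assms by (intro eq_matI, auto simp: scalar_prod_def)

lemma sq_zero: assumes "(c::real mat) \<in> carrier_mat m 1" "(transpose_mat c * c) $$ (0,0) = 0"
  shows "c = 0\<^sub>m m 1"
proof -
  have s: "(transpose_mat c * c) $$ (0,0) = (\<Sum>i<m. (c $$ (i,0))^2)"
    using assms(1) by (auto simp: scalar_prod_def power2_eq_square lessThan_atLeast0 intro!: sum.cong)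
  have "\<forall>i\<in>{..<m}. (c $$ (i,0))^2 = 0"
    using assms(2) unfolding s by (subst sum_nonneg_eq_0_iff[symmetric], auto)
  thus ?thesis using assms(1) by (intro eq_matI, auto)
qed

lemma sq_nonneg: assumes "(c::real mat) \<in> carrier_mat m 1"
  shows "(transpose_mat c * c) $$ (0,0) \<ge> 0"
  using assms by (auto simp: scalar_prod_def intro!: sum_nonneg)

lemma proj_step:
  fixes X :: "real mat"
  assumes X: "X \<in> carrier_mat m N"
  shows "n \<le> N \<Longrightarrow> \<exists>W \<in> carrier_mat N m. transpose_mat (X*W) = X*W \<and> X*W*(X*W) = X*W \<and>
           (\<forall>j<n. X*W*(X*ecol N j) = X*ecol N j)"
proof (induction n)
  case 0
  show ?case using X by (intro bexI[of _ "0\<^sub>m N m"], auto)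
next
  case (Suc n)
  then obtain W where W: "W \<in> carrier_mat N m" and sy: "transpose_mat (X*W) = X*W"
    and id: "X*W*(X*W) = X*W" and fx: "\<forall>j<n. X*W*(X*ecol N j) = X*ecol N j" by auto
  define P where "P = X*W"
  define x where "x = X * ecol N n"
  define c where "c = x - P*x"
  define s where "s = (transpose_mat c * c) $$ (0,0)"
  have D: "dim_row X = m" "dim_col X = N" "dim_row W = N" "dim_col W = m" using X W by auto
  have Pd: "P \<in> carrier_mat m m" unfolding P_def using X W by auto
  have xd: "x \<in> carrier_mat m 1" unfolding x_def using X by auto
  have cd: "c \<in> carrier_mat m 1" unfolding c_def using Pd xd by auto
  have Ps: "transpose_mat P = P" and Pi: "P*P = P" using sy id unfolding P_def by auto
  have Pc: "P*c = 0\<^sub>m m 1"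
  proof -
    have "P*c = P*x - P*(P*x)" unfolding c_def using Pd xd by (simp add: msub_r)
    also have "P*(P*x) = P*x" using Pi Pd xd by (metis carrier_matD massoc)
    finally show ?thesis using Pd xd by simp
  qed
  have cP: "transpose_mat c * P = 0\<^sub>m 1 m"
  proof -
    have "transpose_mat c * P = transpose_mat (P*c)" using Ps Pd cd by simp
    thus ?thesis using Pc by simp
  qed
  show ?case
  proof (cases "s = 0")
    case True
    then have "c = 0\<^sub>m m 1" using sq_zero[OF cd] unfolding s_def by auto
    then have Px: "P*x = x"
    proof (intro eq_matI)
      fix i j assume "i < dim_row x" "j < dim_col x"
      then have "c $$ (i,j) = 0" using \<open>c = 0\<^sub>m m 1\<close> xd by auto
      then show "(P*x) $$ (i,j) = x $$ (i,j)" unfolding c_def using \<open>i < dim_row x\<close> \<open>j < dim_col x\<close> Pd xd by auto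
    qed (use Pd xd in auto)
    show ?thesis
    proof (intro bexI[OF _ W] conjI allI impI)
      show "transpose_mat (X*W) = X*W" "X*W*(X*W) = X*W" using sy id by auto
      fix j assume "j < Suc n"
      then consider "j < n" | "j = n" by linarith
      then show "X*W*(X*ecol N j) = X*ecol N j"
        by cases (use fx Px in \<open>auto simp: P_def x_def\<close>)
    qed
  next
    case False
    define a where "a = 1/s"
    define F where "F = ecol N n - W*x"
    define W' where "W' = W + a \<cdot>\<^sub>m (F * transpose_mat c)"
    have Fd: "F \<in> carrier_mat N 1" unfolding F_def using W xd by auto
    have W'd: "W' \<in> carrier_mat N m" unfolding W'_def using W Fd cd by auto
    have XF: "X*F = c" unfolding F_def c_def x_def P_def using X W xd
      by (simp add: msub_r x_def)
    have XW': "X*W' = P + a \<cdot>\<^sub>m (c * transpose_mat c)"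
    proof -
      have "X*W' = X*W + X*(a \<cdot>\<^sub>m (F * transpose_mat c))" unfolding W'_def using X W Fd cd by (simp add: madd_r)
      also have "X*(a \<cdot>\<^sub>m (F * transpose_mat c)) = a \<cdot>\<^sub>m (c * transpose_mat c)"
        using X Fd cd XF by (simp del: massoc add: massoc[symmetric])
      finally show ?thesis unfolding P_def .
    qed
    have cc: "c * (transpose_mat c * c) = s \<cdot>\<^sub>m c" unfolding s_def using cd by (intro mult_11, auto)
    have as: "a * s = 1" unfolding a_def using False by simp
    define Q where "Q = P + a \<cdot>\<^sub>m (c * transpose_mat c)"
    have Qd: "Q \<in> carrier_mat m m" unfolding Q_def using Pd cd by auto
    have Qs: "transpose_mat Q = Q" unfolding Q_def using Pd cd Ps by simp
    have QP: "Q*P = P"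
    proof -
      have "Q*P = P*P + a \<cdot>\<^sub>m (c * (transpose_mat c * P))" unfolding Q_def using Pd cd by (simp add: madd_l)
      also have "\<dots> = P" using Pi cP Pd cd by simp
      finally show ?thesis .
    qed
    have Qc: "Q*c = c"
    proof -
      have "Q*c = P*c + a \<cdot>\<^sub>m (c * (transpose_mat c * c))" unfolding Q_def using Pd cd by (simp add: madd_l)
      also have "\<dots> = c" unfolding cc using Pc Pd cd as by simp
      finally show ?thesis .
    qed
    have Qi: "Q*Q = Q"
    proof -
      have "Q*Q = Q*(P + a \<cdot>\<^sub>m (c * transpose_mat c))" by (simp only: Q_def[symmetric])
      also have "\<dots> = Q*P + Q*(a \<cdot>\<^sub>m (c * transpose_mat c))" using Qd Pd cd by (simp add: madd_r)
      also have "Q*(a \<cdot>\<^sub>m (c * transpose_mat c)) = a \<cdot>\<^sub>m (c * transpose_mat c)"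
        using Qd cd Qc by (simp del: massoc add: massoc[symmetric])
      finally show ?thesis unfolding QP Q_def[symmetric] .
    qed
    have Qy: "Q*y = y + a \<cdot>\<^sub>m (c * (transpose_mat c * y))" if "y \<in> carrier_mat m 1" "P*y = y" for y
      unfolding Q_def using that Pd cd by (simp add: madd_l)
    show ?thesis
    proof (intro bexI[OF _ W'd] conjI allI impI)
      show "transpose_mat (X*W') = X*W'" "X*W'*(X*W') = X*W'" unfolding XW' Q_def[symmetric] using Qs Qi by auto
      fix j assume "j < Suc n"
      then consider "j < n" | "j = n" by linarith
      then show "X*W'*(X*ecol N j) = X*ecol N j"
      proof cases
        case 1
        define y where "y = X*ecol N j"
        have yd: "y \<in> carrier_mat m 1" unfolding y_def using X by auto
        have Py: "P*y = y" using fx 1 unfolding y_def P_def by auto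
        have "transpose_mat c * y = transpose_mat c * (P * y)" using Py by simp
        also have "\<dots> = 0\<^sub>m 1 1" using cP Pd cd yd by (simp flip: massoc)
        finally have "Q*y = y" using Qy[OF yd Py] yd cd by simp
        then show ?thesis unfolding XW' Q_def[symmetric] y_def .
      next
        case 2
        have cx: "c + P * x = x" unfolding c_def using xd Pd by simp
        have "transpose_mat c * x = transpose_mat c * (c + P * x)" using cx by metis
        also have "\<dots> = transpose_mat c * c" using cP Pd cd xd by (simp add: madd_r flip: massoc)
        finally have ctx: "transpose_mat c * x = transpose_mat c * c" .
        have "Q*x = P*x + a \<cdot>\<^sub>m (c * (transpose_mat c * x))" unfolding Q_def using Pd cd xd by (simp add: madd_l)
        also have "\<dots> = P*x + c" unfolding ctx cc using as by simp
        also have "\<dots> = x" unfolding c_def using Pd xd by (intro eq_matI, auto)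
        finally show ?thesis unfolding XW' Q_def[symmetric] x_def[symmetric] 2 .
      qed
    qed
  qed
qed

lemma col_ext: assumes "A \<in> carrier_mat m N" "(B::real mat) \<in> carrier_mat m N"
  and "\<And>j. j < N \<Longrightarrow> A * ecol N j = B * ecol N j"
shows "A = B"
proof (rule eq_matI)
  fix i j assume ij: "i < dim_row B" "j < dim_col B"
  have e: "(C * ecol N j) $$ (i,0) = C $$ (i,j)" if "C \<in> carrier_mat m N" for C :: "real mat"
  proof -
    have "(C * ecol N j) $$ (i,0) = (\<Sum>u<N. C $$ (i,u) * (if u = j then 1 else 0))"
      using that ij assms(2) by (auto simp: ecol_def scalar_prod_def lessThan_atLeast0 intro!: sum.cong)
    also have "\<dots> = C $$ (i,j)" using ij assms(2) by (simp add: if_distrib cong: if_cong)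
    finally show ?thesis .
  qed
  show "A $$ (i,j) = B $$ (i,j)" using e[OF assms(1)] e[OF assms(2)] assms(3)[of j] ij assms(2) by auto
qed (use assms in auto)

lemma mp_sym:
  fixes G :: "real mat"
  assumes G: "G \<in> carrier_mat n n" and Gs: "transpose_mat G = G"
  shows "mp_inverse G \<in> carrier_mat n n \<and> G * mp_inverse G * G = G \<and>
         mp_inverse G * G * mp_inverse G = mp_inverse G \<and>
         transpose_mat (G * mp_inverse G) = G * mp_inverse G \<and>
         transpose_mat (mp_inverse G * G) = mp_inverse G * G \<and>
         transpose_mat (mp_inverse G) = mp_inverse G"
proof -
  obtain W where W: "W \<in> carrier_mat n n" and sy: "transpose_mat (G*W) = G*W" and id: "G*W*(G*W) = G*W"
    and fx: "\<forall>j<n. G*W*(G*ecol n j) = G*ecol n j"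
    using proj_step[OF G, of n] by auto
  define P where "P = G*W"
  have Pd: "P \<in> carrier_mat n n" unfolding P_def using G W by auto
  have D: "dim_row G = n" "dim_col G = n" "dim_row W = n" "dim_col W = n" using G W by auto
  have PG: "P*G = G"
  proof (rule col_ext[of _ n n])
    fix j assume "j < n"
    then show "P * G * ecol n j = G * ecol n j" using fx D unfolding P_def by auto
  qed (use Pd G in auto)
  have Ps: "transpose_mat P = P" using sy unfolding P_def .
  have P2: "transpose_mat W * G = P"
  proof -
    have "transpose_mat W * G = transpose_mat (G * W)" using D Gs by simp
    thus ?thesis using Ps unfolding P_def by simp
  qed
  have GP: "G*P = G"
  proof -
    have "G*P = transpose_mat (P*G)" using Ps Gs D Pd by simp
    thus ?thesis using PG Gs by simp
  qed
  define H where "H = transpose_mat W * G * W"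
  have Hd: "H \<in> carrier_mat n n" unfolding H_def using W G by auto
  have HP: "H = P*W" unfolding H_def P2 ..
  have GH: "G*H = P" unfolding HP using GP D Pd by (simp flip: massoc add: P_def)
  have HG: "H*G = P"
  proof -
    have "H*G = transpose_mat W * (G * W * G)" unfolding H_def using D by simp
    also have "G*W*G = G" using PG unfolding P_def .
    finally show ?thesis using P2 by simp
  qed
  have c1: "G*H*G = G" unfolding GH using PG .
  have c2: "H*G*H = H"
  proof -
    have "H*G*H = P*H" unfolding HG ..
    also have "\<dots> = P*(P*W)" unfolding HP ..
    also have "\<dots> = (P*P)*W" using Pd D by simp
    also have "P*P = P" using id unfolding P_def .
    finally show ?thesis using HP by simp
  qed
  have c3: "transpose_mat (G*H) = G*H" unfolding GH using Ps .
  have c4: "transpose_mat (H*G) = H*G" unfolding HG using Ps .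
  have c5: "transpose_mat H = H" unfolding H_def using D Gs by simp
  have pen: "\<And>H'. H' \<in> carrier_mat n n \<and> G * H' * G = G \<and> H' * G * H' = H' \<and>
       transpose_mat (G * H') = G * H' \<and> transpose_mat (H' * G) = H' * G \<Longrightarrow> H' = H"
    using penrose_unique[OF G _ Hd] c1 c2 c3 c4 by blast
  have "mp_inverse G = H" unfolding mp_inverse_def using D
    by (intro the_equality, use Hd c1 c2 c3 c4 pen in auto)
  thus ?thesis using Hd c1 c2 c3 c4 c5 by simp
qed

lemma mp_unique_eq:
  fixes A H :: "real mat"
  assumes A: "A \<in> carrier_mat m n" and H: "H \<in> carrier_mat n m"
  and a1: "A*H*A = A" and b1: "H*A*H = H" and c1: "transpose_mat (A*H) = A*H" and d1: "transpose_mat (H*A) = H*A"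
  shows "mp_inverse A = H"
proof -
  have D: "dim_row A = m" "dim_col A = n" using A by auto
  have pen: "\<And>H'. H' \<in> carrier_mat n m \<and> A * H' * A = A \<and> H' * A * H' = H' \<and>
       transpose_mat (A * H') = A * H' \<and> transpose_mat (H' * A) = H' * A \<Longrightarrow> H' = H"
    using penrose_unique[OF A _ H] a1 b1 c1 d1 by blast
  show ?thesis unfolding mp_inverse_def D
    by (rule the_equality, use H a1 b1 c1 d1 in simp, use pen in blast)
qed

lemma tAA_zero: assumes "(E::real mat) \<in> carrier_mat m n" "transpose_mat E * E = 0\<^sub>m n n"
  shows "E = 0\<^sub>m m n"
proof (rule eq_matI)
  fix i j assume ij: "i < dim_row (0\<^sub>m m n)" "j < dim_col (0\<^sub>m m n)"
  have "(transpose_mat E * E) $$ (j,j) = (\<Sum>u<m. (E $$ (u,j))^2)"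
    using assms(1) ij by (auto simp: scalar_prod_def power2_eq_square lessThan_atLeast0 intro!: sum.cong)
  then have "(\<Sum>u<m. (E $$ (u,j))^2) = 0" using assms(2) ij by auto
  then have "\<forall>u\<in>{..<m}. (E $$ (u,j))^2 = 0" by (subst sum_nonneg_eq_0_iff[symmetric], auto)
  then show "E $$ (i,j) = 0\<^sub>m m n $$ (i,j)" using ij by auto
qed (use assms in auto)

lemma proj_props:
  fixes X :: "real mat"
  assumes X: "X \<in> carrier_mat n q"
  shows "proj X \<in> carrier_mat n n \<and> transpose_mat (proj X) = proj X \<and> proj X * X = X"
proof -
  define G where "G = transpose_mat X * X"
  have G: "G \<in> carrier_mat q q" unfolding G_def using X by auto
  have Gs: "transpose_mat G = G" unfolding G_def using X by simp
  define H where "H = mp_inverse G"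
  have Hp: "H \<in> carrier_mat q q" "G*H*G = G" "transpose_mat H = H" using mp_sym[OF G Gs] unfolding H_def by auto
  have D: "dim_row X = n" "dim_col X = q" "dim_row H = q" "dim_col H = q" using X Hp by auto
  have pj: "proj X = X * H * transpose_mat X" unfolding proj_def H_def G_def ..
  define E where "E = X * H * G - X"
  have Ed: "E \<in> carrier_mat n q" unfolding E_def using X Hp G by auto
  have EX: "transpose_mat E * X = 0\<^sub>m q q"
  proof -
    have "transpose_mat E * X = (transpose_mat (X*H*G) - transpose_mat X) * X" unfolding E_def using D G by simp
    also have "\<dots> = G * H * G - G" using D G Hp Gs unfolding G_def by (simp add: msub_l)
    also have "\<dots> = 0\<^sub>m q q" using Hp G by simp
    finally show ?thesis .
  qed
  have "transpose_mat E * E = transpose_mat E * (X*H*G) - transpose_mat E * X" unfolding E_def using Ed D G by (simp add: msub_r)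
  also have "\<dots> = 0\<^sub>m q q" using EX Ed D G unfolding G_def by (simp flip: massoc)
  finally have "E = 0\<^sub>m n q" using tAA_zero[OF Ed] by simp
  then have XHG: "X*H*G = X" unfolding E_def
  proof (intro eq_matI)
    fix i j assume "X * H * G - X = 0\<^sub>m n q" "i < dim_row X" "j < dim_col X"
    then have "(X * H * G - X) $$ (i,j) = 0" using D by simp
    then show "(X*H*G) $$ (i,j) = X $$ (i,j)" using \<open>i < dim_row X\<close> \<open>j < dim_col X\<close> D G by simp
  qed (use D G in auto)
  have PX: "proj X * X = X" unfolding pj using XHG D unfolding G_def by simp
  have "transpose_mat (proj X) = proj X" unfolding pj using D Hp by simp
  moreover have "proj X \<in> carrier_mat n n" unfolding pj using D by auto
  ultimately show ?thesis using PX by simp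
qed

lemma sum_blocks: fixes f :: "nat \<Rightarrow> 'a::comm_monoid_add" shows "(\<Sum>r<b*k. f r) = (\<Sum>i<b. \<Sum>j<k. f (i*k+j))"
proof -
  have "(\<Sum>r<b*k. f r) = (\<Sum>i<b. sum f {i*k..<i*k+k})" using sum.nat_group[of f k b] by simp
  also have "\<dots> = (\<Sum>i<b. \<Sum>j<k. f(i*k+j))"
  proof (rule sum.cong[OF refl])
    fix i show "sum f {i*k..<i*k+k} = (\<Sum>j<k. f (i*k+j))"
      using sum.shift_bounds_nat_ivl[of f 0 "i*k" k] by (simp add: lessThan_atLeast0 add.commute)
  qed
  finally show ?thesis .
qed

lemma dm_blk[simp]: "j < (k::nat) \<Longrightarrow> (i*k+j) div k = i" "j < (k::nat) \<Longrightarrow> (i*k+j) mod k = j"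
  by auto

lemma mtrace_AtA: "mtrace (transpose_mat A * (A::real mat)) \<ge> 0"
  unfolding mtrace_def by (auto simp: scalar_prod_def intro!: sum_nonneg)

lemma mtrace_add: "(A::real mat) \<in> carrier_mat n n \<Longrightarrow> B \<in> carrier_mat n n \<Longrightarrow> mtrace (A + B) = mtrace A + mtrace B"
  unfolding mtrace_def by (auto simp: sum.distrib)

lemma trace_mono:
  fixes Q PB Z :: "real mat"
  assumes Q: "Q \<in> carrier_mat n n" and PB: "PB \<in> carrier_mat n n" and Z: "Z \<in> carrier_mat n t"
  and Qs: "transpose_mat Q = Q" and Qi: "Q*Q = Q" and Ps: "transpose_mat PB = PB" and Pi: "PB*PB = PB"
  and QP: "Q*PB = PB"
  shows "mtrace (transpose_mat Z * (1\<^sub>m n - Q) * Z) \<le> mtrace (transpose_mat Z * (1\<^sub>m n - PB) * Z)"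
proof -
  define D where "D = Q - PB"
  have Dd: "D \<in> carrier_mat n n" unfolding D_def using Q PB by auto
  have PQ: "PB*Q = PB"
  proof -
    have "PB*Q = transpose_mat (Q*PB)" using Qs Ps Q PB by simp
    thus ?thesis using QP Ps by simp
  qed
  have Ds: "transpose_mat D = D" unfolding D_def using Q PB Qs Ps by simp
  have DD: "D*D = D"
  proof -
    have "D*D = (Q*Q - PB*Q) - (Q*PB - PB*PB)" unfolding D_def using Q PB by (simp add: msub_l msub_r)
    also have "\<dots> = D" unfolding Qi QP PQ Pi D_def using Q PB by (intro eq_matI, auto)
    finally show ?thesis .
  qed
  have split: "1\<^sub>m n - PB = (1\<^sub>m n - Q) + D" unfolding D_def using Q PB by (intro eq_matI, auto)
  have eq: "transpose_mat Z * (1\<^sub>m n - PB) * Z = transpose_mat Z * (1\<^sub>m n - Q) * Z + transpose_mat Z * D * Z"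
  proof -
    have "transpose_mat Z * ((1\<^sub>m n - Q) + D) = transpose_mat Z * (1\<^sub>m n - Q) + transpose_mat Z * D"
      by (rule madd_r) (use Q Dd Z in auto)
    moreover have "(transpose_mat Z * (1\<^sub>m n - Q) + transpose_mat Z * D) * Z = transpose_mat Z * (1\<^sub>m n - Q) * Z + transpose_mat Z * D * Z"
      by (rule madd_l) (use Q Dd Z in auto)
    ultimately show ?thesis unfolding split by simp
  qed
  have nn: "mtrace (transpose_mat Z * D * Z) \<ge> 0"
  proof -
    have "transpose_mat (D*Z) * (D*Z) = transpose_mat Z * (D * (D * Z))" using Ds Dd Z by simp
    also have "(D*D)*Z = D*(D*Z)" using Dd Z by simp
    then have "D * (D * Z) = D*Z" using DD by simp
    also have "transpose_mat Z * (D * Z) = transpose_mat Z * D * Z" using Dd Z by simp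
    finally have "transpose_mat Z * D * Z = transpose_mat (D*Z) * (D*Z)" by simp
    thus ?thesis using mtrace_AtA by simp
  qed
  have c1: "transpose_mat Z * (1\<^sub>m n - Q) * Z \<in> carrier_mat t t" "transpose_mat Z * D * Z \<in> carrier_mat t t"
    using Q Dd Z by auto
  have "mtrace (transpose_mat Z * (1\<^sub>m n - PB) * Z) = mtrace (transpose_mat Z * (1\<^sub>m n - Q) * Z) + mtrace (transpose_mat Z * D * Z)"
    unfolding eq by (rule mtrace_add[OF c1])
  then show ?thesis using nn by linarith
qed

lemma proj_idem: assumes X: "(X::real mat) \<in> carrier_mat n q" shows "proj X * proj X = proj X"
proof -
  have pp: "proj X \<in> carrier_mat n n" "proj X * X = X" using proj_props[OF X] by auto
  define H where "H = mp_inverse (transpose_mat X * X)"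
  have Hd: "H \<in> carrier_mat q q" unfolding H_def using mp_sym[of "transpose_mat X * X" q] X by auto
  have pj: "proj X = X * (H * transpose_mat X)" unfolding proj_def H_def[symmetric] using X Hd by simp
  have "proj X * proj X = proj X * (X * (H * transpose_mat X))" using pj by metis
  also have "\<dots> = (proj X * X) * (H * transpose_mat X)" using pp(1) X Hd by simp
  also have "\<dots> = X * (H * transpose_mat X)" by (simp only: pp(2))
  also have "\<dots> = proj X" using pj by simp
  finally show ?thesis .
qed

lemma KtK: "transpose_mat (K_mat mm t) * K_mat mm t = real mm \<cdot>\<^sub>m 1\<^sub>m t"
proof (rule eq_matI)
  fix i j assume ij: "i < dim_row (real mm \<cdot>\<^sub>m 1\<^sub>m t)" "j < dim_col (real mm \<cdot>\<^sub>m 1\<^sub>m t)"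
  then have ij': "i < t" "j < t" by auto
  have "(transpose_mat (K_mat mm t) * K_mat mm t) $$ (i,j) =
      (\<Sum>r<mm*t. (if r mod t = i then 1 else 0) * (if r mod t = j then (1::real) else 0))"
    using ij' by (auto simp: K_mat_def scalar_prod_def lessThan_atLeast0 intro!: sum.cong)
  also have "\<dots> = (\<Sum>q<mm. \<Sum>u<t. (if u = i \<and> u = j then (1::real) else 0))"
    unfolding sum_blocks by (intro sum.cong refl, auto)
  also have "\<dots> = (\<Sum>q<mm. (if i = j then (1::real) else 0))"
    using ij' by (intro sum.cong refl, cases "i = j"; auto simp: sum.delta intro!: sum.neutral)
  also have "\<dots> = (real mm \<cdot>\<^sub>m 1\<^sub>m t) $$ (i,j)" using ij' by simp
  finally show "(transpose_mat (K_mat mm t) * K_mat mm t) $$ (i,j) = (real mm \<cdot>\<^sub>m 1\<^sub>m t) $$ (i,j)" .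
qed (auto simp: K_mat_def)

lemma BtB: "transpose_mat (block_mat b k) * block_mat b k = real k \<cdot>\<^sub>m 1\<^sub>m b"
proof (rule eq_matI)
  fix i j assume ij: "i < dim_row (real k \<cdot>\<^sub>m 1\<^sub>m b)" "j < dim_col (real k \<cdot>\<^sub>m 1\<^sub>m b)"
  then have ij': "i < b" "j < b" by auto
  have "(transpose_mat (block_mat b k) * block_mat b k) $$ (i,j) =
      (\<Sum>r<b*k. (if r div k = i then 1 else 0) * (if r div k = j then (1::real) else 0))"
    using ij' by (auto simp: block_mat_def scalar_prod_def lessThan_atLeast0 intro!: sum.cong)
  also have "\<dots> = (\<Sum>q<b. \<Sum>u<k. (if q = i \<and> q = j then (1::real) else 0))"
    unfolding sum_blocks by (intro sum.cong refl, auto)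
  also have "\<dots> = (\<Sum>q<b. (if q = i \<and> q = j then real k else 0))"
    by (intro sum.cong refl, auto)
  also have "\<dots> = (if i = j then real k else 0)"
    using ij' by (cases "i = j"; auto simp: sum.delta intro!: sum.neutral)
  also have "\<dots> = (real k \<cdot>\<^sub>m 1\<^sub>m b) $$ (i,j)" using ij' by simp
  finally show "(transpose_mat (block_mat b k) * block_mat b k) $$ (i,j) = (real k \<cdot>\<^sub>m 1\<^sub>m b) $$ (i,j)" .
qed (auto simp: block_mat_def)

lemma mp_scalar: assumes "0 < mm" shows "mp_inverse (real mm \<cdot>\<^sub>m 1\<^sub>m t) = (1 / real mm) \<cdot>\<^sub>m 1\<^sub>m t"
proof (rule mp_unique_eq[of _ t t])
  have "real mm \<noteq> 0" using assms by simp
  then show "real mm \<cdot>\<^sub>m 1\<^sub>m t * ((1 / real mm) \<cdot>\<^sub>m 1\<^sub>m t) * (real mm \<cdot>\<^sub>m 1\<^sub>m t) = real mm \<cdot>\<^sub>m 1\<^sub>m t"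
    "(1 / real mm) \<cdot>\<^sub>m 1\<^sub>m t * (real mm \<cdot>\<^sub>m 1\<^sub>m t) * ((1 / real mm) \<cdot>\<^sub>m 1\<^sub>m t) = (1 / real mm) \<cdot>\<^sub>m 1\<^sub>m t"
    by simp_all
qed (auto simp: assms)

lemma hcat_dims[simp]: "dim_row (hcat X Y) = dim_row X" "dim_col (hcat X Y) = dim_col X + dim_col Y"
  by (auto simp: hcat_def)

lemma hcat_index: "i < dim_row X \<Longrightarrow> j < dim_col X + dim_col Y \<Longrightarrow>
  hcat X Y $$ (i,j) = (if j < dim_col X then X $$ (i,j) else Y $$ (i, j - dim_col X))"
  by (auto simp: hcat_def)

lemma hcat_sel: assumes "dim_row Y = dim_row X"
  shows "hcat X Y * mat (dim_col X + dim_col Y) (dim_col Y) (\<lambda>(r,c). if r = dim_col X + c then 1 else 0) = (Y::real mat)"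
proof (rule eq_matI)
  fix i j assume ij: "i < dim_row Y" "j < dim_col Y"
  have "(hcat X Y * mat (dim_col X + dim_col Y) (dim_col Y) (\<lambda>(r,c). if r = dim_col X + c then 1 else 0)) $$ (i,j)
     = (\<Sum>r<dim_col X + dim_col Y. hcat X Y $$ (i,r) * (if r = dim_col X + j then 1 else 0))"
    using ij assms by (auto simp: scalar_prod_def lessThan_atLeast0 intro!: sum.cong)
  also have "\<dots> = hcat X Y $$ (i, dim_col X + j)" using ij by (simp add: if_distrib cong: if_cong)
  also have "\<dots> = Y $$ (i,j)" using ij assms by (simp add: hcat_index)
  finally show "(hcat X Y * mat (dim_col X + dim_col Y) (dim_col Y) (\<lambda>(r,c). if r = dim_col X + c then 1 else 0)) $$ (i,j) = Y $$ (i,j)" .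
qed (use assms in auto)

lemma info_generic:
  fixes A :: "real mat"
  assumes A: "A \<in> carrier_mat (b*k) (mm*t)" and mm: "0 < mm" and k: "0 < k"
  shows "mtrace (info_mat A (block_mat b k) (K_mat mm t)) \<le>
    mtrace (transpose_mat (A * K_mat mm t * ((1/real mm) \<cdot>\<^sub>m 1\<^sub>m t)) *
      (1\<^sub>m (b*k) - (1/real k) \<cdot>\<^sub>m (block_mat b k * transpose_mat (block_mat b k))) *
      (A * K_mat mm t * ((1/real mm) \<cdot>\<^sub>m 1\<^sub>m t)))"
proof -
  define K where "K = K_mat mm t"
  define B where "B = block_mat b k"
  define KK where "KK = (1/real mm) \<cdot>\<^sub>m 1\<^sub>m t"
  define Mm where "Mm = 1\<^sub>m (mm*t) - K * KK * transpose_mat K"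
  define Z where "Z = A * K * KK"
  define X2 where "X2 = hcat (A * Mm) B"
  define Q where "Q = proj X2"
  define PB where "PB = (1/real k) \<cdot>\<^sub>m (B * transpose_mat B)"
  have Kd: "K \<in> carrier_mat (mm*t) t" by (auto simp: K_def K_mat_def)
  have Bd: "B \<in> carrier_mat (b*k) b" by (auto simp: B_def block_mat_def)
  have KKd: "KK \<in> carrier_mat t t" by (auto simp: KK_def)
  have Mmd: "Mm \<in> carrier_mat (mm*t) (mm*t)" unfolding Mm_def using Kd KKd by auto
  have Zd: "Z \<in> carrier_mat (b*k) t" unfolding Z_def using A Kd KKd by auto
  have mpK: "mp_inverse (transpose_mat K * K) = KK" unfolding K_def KK_def KtK by (rule mp_scalar[OF mm])
  have X2d: "X2 \<in> carrier_mat (b*k) (mm*t + b)" unfolding X2_def using A Mmd Bd by auto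
  have info: "info_mat A B K = transpose_mat Z * (1\<^sub>m (b*k) - Q) * Z"
  proof -
    have "dim_row K = mm*t" using Kd by auto
    moreover have "dim_row X2 = b*k" using X2d by auto
    ultimately show ?thesis unfolding info_mat_def Let_def mpK proj_perp_def Q_def X2_def Mm_def Z_def
      by simp
  qed
  have Qd: "Q \<in> carrier_mat (b*k) (b*k)" and Qs: "transpose_mat Q = Q" and QX: "Q * X2 = X2"
    using proj_props[OF X2d] unfolding Q_def by auto
  have Qi: "Q * Q = Q" using proj_idem[OF X2d] unfolding Q_def .
  define S where "S = mat (dim_col (A*Mm) + dim_col B) (dim_col B) (\<lambda>(r,c). if r = dim_col (A*Mm) + c then 1 else (0::real))"
  have BS: "X2 * S = B" unfolding X2_def S_def by (rule hcat_sel, use A Bd in auto)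
  have Sd: "S \<in> carrier_mat (mm*t + b) b" unfolding S_def using A Mmd Bd by auto
  have QB: "Q * B = B"
  proof -
    have "Q * B = Q * (X2 * S)" using BS by simp
    also have "\<dots> = (Q * X2) * S" using Qd X2d Sd by simp
    finally show ?thesis using QX BS by simp
  qed
  have PBd: "PB \<in> carrier_mat (b*k) (b*k)" unfolding PB_def using Bd by auto
  have PBs: "transpose_mat PB = PB" unfolding PB_def using Bd by simp
  have QPB: "Q * PB = PB"
  proof -
    have "Q * PB = (1/real k) \<cdot>\<^sub>m ((Q * B) * transpose_mat B)" unfolding PB_def using Qd Bd by simp
    thus ?thesis unfolding QB PB_def .
  qed
  have PBi: "PB * PB = PB"
  proof -
    have "PB * PB = ((1/real k) * (1/real k)) \<cdot>\<^sub>m (B * ((transpose_mat B * B) * transpose_mat B))"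
      unfolding PB_def using Bd by simp
    also have "B * ((transpose_mat B * B) * transpose_mat B) = real k \<cdot>\<^sub>m (B * transpose_mat B)"
      unfolding B_def BtB using Bd[unfolded B_def] by simp
    finally show ?thesis using k unfolding PB_def by simp
  qed
  have "mtrace (transpose_mat Z * (1\<^sub>m (b*k) - Q) * Z) \<le> mtrace (transpose_mat Z * (1\<^sub>m (b*k) - PB) * Z)"
    by (rule trace_mono[OF Qd PBd Zd Qs Qi PBs PBi QPB])
  then show ?thesis using info unfolding Z_def PB_def K_def B_def KK_def by simp
qed

lemma mtrace_sub: "(A::real mat) \<in> carrier_mat n n \<Longrightarrow> B \<in> carrier_mat n n \<Longrightarrow> mtrace (A - B) = mtrace A - mtrace B"
  unfolding mtrace_def by (auto simp: sum_subtractf)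

lemma mtrace_sm: "dim_col A = dim_row A \<Longrightarrow> mtrace (a \<cdot>\<^sub>m (A::real mat)) = a * mtrace A"
  unfolding mtrace_def by (auto simp: sum_distrib_left intro!: sum.cong)

lemma mtrace_AtA_eq: "(A::real mat) \<in> carrier_mat m n \<Longrightarrow> mtrace (transpose_mat A * A) = (\<Sum>c<n. \<Sum>r<m. (A $$ (r,c))^2)"
  unfolding mtrace_def by (auto simp: scalar_prod_def power2_eq_square lessThan_atLeast0 intro!: sum.cong)

lemma trace_formula:
  fixes Z :: "real mat"
  assumes Z: "Z \<in> carrier_mat (b*k) t" and k: "0 < k"
  shows "mtrace (transpose_mat Z * (1\<^sub>m (b*k) - (1/real k) \<cdot>\<^sub>m (block_mat b k * transpose_mat (block_mat b k))) * Z)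
    = (\<Sum>i<b. \<Sum>c<t. (\<Sum>j<k. (Z $$ (i*k+j,c))^2) - (1/real k) * (\<Sum>j<k. Z $$ (i*k+j,c))^2)"
proof -
  define B where "B = block_mat b k"
  define W where "W = transpose_mat B * Z"
  have Bd: "B \<in> carrier_mat (b*k) b" by (auto simp: B_def block_mat_def)
  have Wd: "W \<in> carrier_mat b t" unfolding W_def using Bd Z by auto
  have eq: "transpose_mat Z * (1\<^sub>m (b*k) - (1/real k) \<cdot>\<^sub>m (B * transpose_mat B)) * Z
      = transpose_mat Z * Z - (1/real k) \<cdot>\<^sub>m (transpose_mat W * W)"
  proof -
    have "transpose_mat Z * (1\<^sub>m (b*k) - (1/real k) \<cdot>\<^sub>m (B * transpose_mat B))
       = transpose_mat Z * 1\<^sub>m (b*k) - transpose_mat Z * ((1/real k) \<cdot>\<^sub>m (B * transpose_mat B))"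
      by (rule msub_r) (use Z Bd in auto)
    also have "\<dots> = transpose_mat Z - (1/real k) \<cdot>\<^sub>m (transpose_mat Z * (B * transpose_mat B))" using Z Bd by simp
    finally have e1: "transpose_mat Z * (1\<^sub>m (b*k) - (1/real k) \<cdot>\<^sub>m (B * transpose_mat B)) =
       transpose_mat Z - (1/real k) \<cdot>\<^sub>m (transpose_mat Z * (B * transpose_mat B))" .
    have "(transpose_mat Z - (1/real k) \<cdot>\<^sub>m (transpose_mat Z * (B * transpose_mat B))) * Z
       = transpose_mat Z * Z - ((1/real k) \<cdot>\<^sub>m (transpose_mat Z * (B * transpose_mat B))) * Z"
      by (rule msub_l) (use Z Bd in auto)
    also have "((1/real k) \<cdot>\<^sub>m (transpose_mat Z * (B * transpose_mat B))) * Z = (1/real k) \<cdot>\<^sub>m (transpose_mat W * W)"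
      unfolding W_def using Z Bd by simp
    finally show ?thesis unfolding e1 .
  qed
  have "mtrace (transpose_mat Z * Z - (1/real k) \<cdot>\<^sub>m (transpose_mat W * W))
      = mtrace (transpose_mat Z * Z) - (1/real k) * mtrace (transpose_mat W * W)"
    using Z Wd by (subst mtrace_sub[of _ t], auto simp: mtrace_sm)
  also have "mtrace (transpose_mat Z * Z) = (\<Sum>c<t. \<Sum>r<b*k. (Z $$ (r,c))^2)" by (rule mtrace_AtA_eq[OF Z])
  also have "\<dots> = (\<Sum>i<b. \<Sum>c<t. \<Sum>j<k. (Z $$ (i*k+j,c))^2)"
    unfolding sum_blocks by (rule sum.swap)
  also have "mtrace (transpose_mat W * W) = (\<Sum>c<t. \<Sum>i<b. (W $$ (i,c))^2)" by (rule mtrace_AtA_eq[OF Wd])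
  also have "\<dots> = (\<Sum>i<b. \<Sum>c<t. (\<Sum>j<k. Z $$ (i*k+j,c))^2)"
  proof -
    have "W $$ (i,c) = (\<Sum>j<k. Z $$ (i*k+j,c))" if "i < b" "c < t" for i c
    proof -
      have "W $$ (i,c) = (\<Sum>r<b*k. (if r div k = i then 1 else 0) * Z $$ (r,c))"
        unfolding W_def B_def using that Z by (auto simp: block_mat_def scalar_prod_def lessThan_atLeast0 intro!: sum.cong)
      also have "\<dots> = (\<Sum>i'<b. \<Sum>j<k. (if i' = i then Z $$ (i'*k+j,c) else 0))"
        unfolding sum_blocks by (intro sum.cong refl, auto)
      also have "\<dots> = (\<Sum>i'<b. (if i' = i then (\<Sum>j<k. Z $$ (i'*k+j,c)) else 0))"
        by (intro sum.cong refl, auto)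
      also have "\<dots> = (\<Sum>j<k. Z $$ (i*k+j,c))" using that by (simp add: sum.delta)
      finally show ?thesis .
    qed
    then show ?thesis by (subst sum.swap, intro sum.cong refl, auto)
  qed
  finally show ?thesis unfolding B_def[symmetric] eq
    by (simp add: sum_subtractf sum_distrib_left)
qed

definition ee :: "nat \<Rightarrow> nat \<Rightarrow> real" where "ee x c = (if x = c then 1 else 0)"

lemma sum_rot1: assumes "0 < (k::nat)" shows "(\<Sum>j<k. F ((j + 1) mod k)) = (\<Sum>j<k. F j)"
proof -
  obtain k' where k': "k = Suc k'" using assms by (cases k) auto
  have "(\<Sum>j<k. F ((j + 1) mod k)) = (\<Sum>j<k'. F ((j + 1) mod k)) + F ((k' + 1) mod k)"
    unfolding k' by simp
  also have "(\<Sum>j<k'. F ((j + 1) mod k)) = (\<Sum>j<k'. F (Suc j))"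
    by (intro sum.cong refl, auto simp: k')
  also have "F ((k' + 1) mod k) = F 0" by (simp add: k')
  also have "(\<Sum>j<k'. F (Suc j)) + F 0 = (\<Sum>j<k. F j)" unfolding k' sum.lessThan_Suc_shift by (simp add: add.commute)
  finally show ?thesis .
qed

lemma sum_rot: assumes "0 < (k::nat)" shows "(\<Sum>j<k. F ((j + s) mod k)) = (\<Sum>j<k. F j)"
proof (induction s arbitrary: F)
  case 0
  show ?case by (intro sum.cong refl, auto)
next
  case (Suc s)
  have "(\<Sum>j<k. F ((j + Suc s) mod k)) = (\<Sum>j<k. (\<lambda>x. F ((x + 1) mod k)) ((j + s) mod k))"
    by (intro sum.cong refl, simp add: mod_Suc_eq)
  also have "\<dots> = (\<Sum>j<k. F ((j + 1) mod k))" by (rule Suc.IH)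
  also have "\<dots> = (\<Sum>j<k. F j)" by (rule sum_rot1[OF assms])
  finally show ?case .
qed

lemma sum_rotL: assumes "0 < (k::nat)" shows "(\<Sum>j<k. F ((j + k - 1) mod k)) = (\<Sum>j<k. F j)"
  using sum_rot[OF assms, of F "k - 1"] assms by (simp add: add.assoc)

lemma prev_next: "j < (k::nat) \<Longrightarrow> ((j + 1) mod k + k - 1) mod k = j"
proof (cases "j + 1 < k")
  case True
  then show ?thesis by simp
next
  case False
  assume "j < k"
  then have "j + 1 = k" using False by simp
  then show ?thesis by simp
qed

lemma card_sum: fixes k :: nat shows "real (card {j. j < k \<and> P j}) = (\<Sum>j<k. if P j then 1 else 0)"
proof (induction k)
  case 0
  show ?case by simp
next
  case (Suc k)
  show ?case
  proof (cases "P k")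
    case True
    then have "{j. j < Suc k \<and> P j} = insert k {j. j < k \<and> P j}" by auto
    moreover have "k \<notin> {j. j < k \<and> P j}" by auto
    ultimately show ?thesis using Suc True by simp
  next
    case False
    then have "{j. j < Suc k \<and> P j} = {j. j < k \<and> P j}" using less_Suc_eq by auto
    then show ?thesis using Suc False by simp
  qed
qed

lemma sum_ee: assumes "a < t" shows "(\<Sum>c<t. ee a c * ee b c) = ee a b"
proof -
  have "(\<Sum>c<t. ee a c * ee b c) = (\<Sum>c<t. if c = a then ee a b else 0)"
    by (intro sum.cong refl, auto simp: ee_def)
  also have "\<dots> = ee a b" using assms by (simp add: sum.delta')
  finally show ?thesis .
qed

lemma sum_ee1: "a < t \<Longrightarrow> (\<Sum>c<t. ee a c) = 1"
  by (auto simp: ee_def sum.delta)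

lemma cnt_n: "length l = k \<Longrightarrow> (\<Sum>j<k. ee (l!j) c) = real (seq_n l c)"
  unfolding seq_n_def card_sum ee_def by (intro sum.cong refl, auto)

lemma cnt_m: assumes "length l = k" "set l \<subseteq> {..<t}" "0 < k"
  shows "(\<Sum>i<t. real (seq_m l i)) = (\<Sum>j<k. ee (l!((j+k-1) mod k)) (l!j))"
proof -
  have lt: "\<And>j. j < k \<Longrightarrow> l!j < t" using assms(1,2) nth_mem by blast
  have lt2: "\<And>j. l!((j+k-1) mod k) < t" using lt assms(3) by simp
  have "(\<Sum>i<t. real (seq_m l i)) = (\<Sum>i<t. \<Sum>j<k. ee (l!((j+k-1) mod k)) i * ee (l!j) i)"
    unfolding seq_m_def card_sum ee_def using assms(1) by (intro sum.cong refl, auto)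
  also have "\<dots> = (\<Sum>j<k. \<Sum>i<t. ee (l!j) i * ee (l!((j+k-1) mod k)) i)"
    by (subst sum.swap, simp add: mult.commute)
  also have "\<dots> = (\<Sum>j<k. ee (l!j) (l!((j+k-1) mod k)))"
    using lt lt2 by (intro sum.cong refl sum_ee, auto)
  also have "\<dots> = (\<Sum>j<k. ee (l!((j+k-1) mod k)) (l!j))"
    by (intro sum.cong refl, auto simp: ee_def)
  finally show ?thesis .
qed

lemma cnt_p: assumes "length l = k" "set l \<subseteq> {..<t}" "0 < k"
  shows "(\<Sum>i<t. real (seq_p l i)) = (\<Sum>j<k. ee (l!((j+k-1) mod k)) (l!((j+1) mod k)))"
proof -
  have lt: "\<And>j. j < k \<Longrightarrow> l!j < t" using assms(1,2) nth_mem by blast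
  have lt2: "\<And>j. l!((j+k-1) mod k) < t" using lt assms(3) by simp
  have "(\<Sum>i<t. real (seq_p l i)) = (\<Sum>i<t. \<Sum>j<k. ee (l!((j+k-1) mod k)) i * ee (l!((j+1) mod k)) i)"
    unfolding seq_p_def card_sum ee_def using assms(1) by (intro sum.cong refl, auto)
  also have "\<dots> = (\<Sum>j<k. \<Sum>i<t. ee (l!((j+k-1) mod k)) i * ee (l!((j+1) mod k)) i)"
    by (rule sum.swap)
  also have "\<dots> = (\<Sum>j<k. ee (l!((j+k-1) mod k)) (l!((j+1) mod k)))"
    using lt lt2 by (intro sum.cong refl sum_ee, auto)
  finally show ?thesis .
qed

lemma cnt_m2: assumes "length l = k" "set l \<subseteq> {..<t}" "0 < k"
  shows "(\<Sum>i<t. real (seq_m l i)) = (\<Sum>j<k. ee (l!j) (l!((j+1) mod k)))"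
proof -
  have "(\<Sum>j<k. ee (l!j) (l!((j+1) mod k))) = (\<Sum>j<k. (\<lambda>x. ee (l!((x+k-1) mod k)) (l!x)) ((j+1) mod k))"
  proof (intro sum.cong refl)
    fix x assume "x \<in> {..<k}"
    then have "((x + 1) mod k + k - 1) mod k = x" by (intro prev_next) auto
    then show "ee (l!x) (l!((x+1) mod k)) = (\<lambda>x. ee (l!((x+k-1) mod k)) (l!x)) ((x+1) mod k)" by simp
  qed
  also have "\<dots> = (\<Sum>j<k. ee (l!((j+k-1) mod k)) (l!j))" by (rule sum_rot1[OF assms(3)])
  finally show ?thesis using cnt_m[OF assms] by simp
qed

lemma ee_sym: "ee a b = ee b a" by (auto simp: ee_def)

lemma ee_sq2: "((ee a c + ee b c)/2)^2 = (ee a c + ee b c + 2 * (ee a c * ee b c)) / 4"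
  by (auto simp: ee_def power2_eq_square)

lemma ee_sq3: "((ee a c + ee b c + ee h c)/3)^2 =
   (ee a c + ee b c + ee h c + 2 * (ee a c * ee b c) + 2 * (ee a c * ee h c) + 2 * (ee b c * ee h c)) / 9"
  by (auto simp: ee_def power2_eq_square)

lemma sumc2: assumes "a < t" "b < t"
  shows "(\<Sum>c<t. (ee a c + ee b c + 2 * (ee a c * ee b c)) / 4) = (2 + 2 * ee a b) / 4"
  using assms by (simp add: sum_divide_distrib[symmetric] sum.distrib sum_distrib_left[symmetric] sum_ee1 sum_ee)

lemma sumc3: assumes "a < t" "b < t" "h < t"
  shows "(\<Sum>c<t. (ee a c + ee b c + ee h c + 2 * (ee a c * ee b c) + 2 * (ee a c * ee h c) + 2 * (ee b c * ee h c)) / 9)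
     = (3 + 2 * ee a b + 2 * ee a h + 2 * ee b h) / 9"
  using assms by (simp add: sum_divide_distrib[symmetric] sum.distrib sum_distrib_left[symmetric] sum_ee1 sum_ee)

lemma block_phi:
  assumes l: "length l = k" "set l \<subseteq> {..<t}" and k: "0 < k"
  shows "(\<Sum>c<t. (\<Sum>j<k. ((ee (l!j) c + ee (l!((j+k-1) mod k)) c)/2)^2)
           - (1/real k) * (\<Sum>j<k. (ee (l!j) c + ee (l!((j+k-1) mod k)) c)/2)^2) = c_fun t l"
proof -
  have lt: "\<And>j. j < k \<Longrightarrow> l!j < t" using l nth_mem by blast
  have lt2: "\<And>j. l!((j+k-1) mod k) < t" using lt k by simp
  define N where "N = (\<Sum>c<t. (real (seq_n l c))^2)"
  define M where "M = (\<Sum>i<t. real (seq_m l i))"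
  have S1: "(\<Sum>c<t. \<Sum>j<k. ((ee (l!j) c + ee (l!((j+k-1) mod k)) c)/2)^2) = (2 * real k + 2 * M) / 4"
  proof -
    have "(\<Sum>c<t. \<Sum>j<k. ((ee (l!j) c + ee (l!((j+k-1) mod k)) c)/2)^2)
       = (\<Sum>j<k. \<Sum>c<t. (ee (l!j) c + ee (l!((j+k-1) mod k)) c + 2 * (ee (l!j) c * ee (l!((j+k-1) mod k)) c)) / 4)"
      unfolding ee_sq2 by (rule sum.swap)
    also have "\<dots> = (\<Sum>j<k. (2 + 2 * ee (l!j) (l!((j+k-1) mod k))) / 4)"
      using lt lt2 by (intro sum.cong refl sumc2, auto)
    also have "\<dots> = (2 * real k + 2 * (\<Sum>j<k. ee (l!((j+k-1) mod k)) (l!j))) / 4"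
      by (simp add: sum_divide_distrib[symmetric] sum.distrib sum_distrib_left[symmetric] ee_sym)
    finally show ?thesis unfolding M_def cnt_m[OF l k] .
  qed
  have S2: "(\<Sum>j<k. (ee (l!j) c + ee (l!((j+k-1) mod k)) c)/2) = real (seq_n l c)" for c
  proof -
    have "(\<Sum>j<k. ee (l!((j+k-1) mod k)) c) = (\<Sum>j<k. ee (l!j) c)"
      by (rule sum_rotL[OF k, of "\<lambda>j. ee (l!j) c"])
    then show ?thesis using cnt_n[OF l(1), of c] by (simp add: sum_divide_distrib[symmetric] sum.distrib)
  qed
  have "(\<Sum>c<t. (\<Sum>j<k. ((ee (l!j) c + ee (l!((j+k-1) mod k)) c)/2)^2)
           - (1/real k) * (\<Sum>j<k. (ee (l!j) c + ee (l!((j+k-1) mod k)) c)/2)^2)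
      = (2 * real k + 2 * M) / 4 - (1/real k) * N"
    unfolding sum_subtractf S1 S2 N_def by (simp add: sum_distrib_left)
  also have "\<dots> = c_fun t l" unfolding c_fun_def Let_def N_def[symmetric] M_def[symmetric] l(1)
    using k by (simp add: field_simps)
  finally show ?thesis .
qed

lemma block_psi:
  assumes l: "length l = k" "set l \<subseteq> {..<t}" and k: "0 < k"
  shows "(\<Sum>c<t. (\<Sum>j<k. ((ee (l!j) c + ee (l!((j+k-1) mod k)) c + ee (l!((j+1) mod k)) c)/3)^2)
           - (1/real k) * (\<Sum>j<k. (ee (l!j) c + ee (l!((j+k-1) mod k)) c + ee (l!((j+1) mod k)) c)/3)^2) = ctilde_fun t l"
proof -
  have lt: "\<And>j. j < k \<Longrightarrow> l!j < t" using l nth_mem by blast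
  have lt2: "\<And>j. l!((j+k-1) mod k) < t" using lt k by simp
  have lt3: "\<And>j. l!((j+1) mod k) < t" using lt k by simp
  define N where "N = (\<Sum>c<t. (real (seq_n l c))^2)"
  define M where "M = (\<Sum>i<t. real (seq_m l i))"
  define P where "P = (\<Sum>i<t. real (seq_p l i))"
  have S1: "(\<Sum>c<t. \<Sum>j<k. ((ee (l!j) c + ee (l!((j+k-1) mod k)) c + ee (l!((j+1) mod k)) c)/3)^2)
     = (3 * real k + 4 * M + 2 * P) / 9"
  proof -
    have "(\<Sum>c<t. \<Sum>j<k. ((ee (l!j) c + ee (l!((j+k-1) mod k)) c + ee (l!((j+1) mod k)) c)/3)^2)
       = (\<Sum>j<k. \<Sum>c<t. (ee (l!j) c + ee (l!((j+k-1) mod k)) c + ee (l!((j+1) mod k)) c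
          + 2 * (ee (l!j) c * ee (l!((j+k-1) mod k)) c) + 2 * (ee (l!j) c * ee (l!((j+1) mod k)) c)
          + 2 * (ee (l!((j+k-1) mod k)) c * ee (l!((j+1) mod k)) c)) / 9)"
      unfolding ee_sq3 by (rule sum.swap)
    also have "\<dots> = (\<Sum>j<k. (3 + 2 * ee (l!j) (l!((j+k-1) mod k)) + 2 * ee (l!j) (l!((j+1) mod k))
          + 2 * ee (l!((j+k-1) mod k)) (l!((j+1) mod k))) / 9)"
      using lt lt2 lt3 by (intro sum.cong refl sumc3, auto)
    also have "\<dots> = (3 * real k + 2 * (\<Sum>j<k. ee (l!((j+k-1) mod k)) (l!j)) + 2 * (\<Sum>j<k. ee (l!j) (l!((j+1) mod k)))
          + 2 * (\<Sum>j<k. ee (l!((j+k-1) mod k)) (l!((j+1) mod k)))) / 9"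
      by (simp add: sum_divide_distrib[symmetric] sum.distrib sum_distrib_left[symmetric] ee_sym)
    finally show ?thesis unfolding M_def P_def cnt_m[OF l k, symmetric] cnt_m2[OF l k, symmetric] cnt_p[OF l k, symmetric]
      by simp
  qed
  have S2: "(\<Sum>j<k. (ee (l!j) c + ee (l!((j+k-1) mod k)) c + ee (l!((j+1) mod k)) c)/3) = real (seq_n l c)" for c
  proof -
    have "(\<Sum>j<k. ee (l!((j+k-1) mod k)) c) = (\<Sum>j<k. ee (l!j) c)"
      by (rule sum_rotL[OF k, of "\<lambda>j. ee (l!j) c"])
    moreover have "(\<Sum>j<k. ee (l!((j+1) mod k)) c) = (\<Sum>j<k. ee (l!j) c)"
      by (rule sum_rot1[OF k, of "\<lambda>j. ee (l!j) c"])
    ultimately show ?thesis using cnt_n[OF l(1), of c] by (simp add: sum_divide_distrib[symmetric] sum.distrib)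
  qed
  have "(\<Sum>c<t. (\<Sum>j<k. ((ee (l!j) c + ee (l!((j+k-1) mod k)) c + ee (l!((j+1) mod k)) c)/3)^2)
           - (1/real k) * (\<Sum>j<k. (ee (l!j) c + ee (l!((j+k-1) mod k)) c + ee (l!((j+1) mod k)) c)/3)^2)
      = (3 * real k + 4 * M + 2 * P) / 9 - (1/real k) * N"
    unfolding sum_subtractf S1 S2 N_def by (simp add: sum_distrib_left)
  also have "\<dots> = ctilde_fun t l" unfolding ctilde_fun_def Let_def N_def[symmetric] M_def[symmetric] P_def[symmetric] l(1)
    using k by (simp add: field_simps)
  finally show ?thesis .
qed

lemma AK_entry: assumes "A \<in> carrier_mat n (mm*t)" "r < n" "c < t"
  shows "(A * K_mat mm t) $$ (r,c) = (\<Sum>q<mm. A $$ (r, q*t+c))"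
proof -
  have "(A * K_mat mm t) $$ (r,c) = (\<Sum>s<mm*t. A $$ (r,s) * (if s mod t = c then 1 else 0))"
    using assms by (auto simp: K_mat_def scalar_prod_def lessThan_atLeast0 intro!: sum.cong)
  also have "\<dots> = (\<Sum>q<mm. \<Sum>u<t. (if u = c then A $$ (r, q*t+u) else 0))"
    unfolding sum_blocks by (intro sum.cong refl, auto)
  also have "\<dots> = (\<Sum>q<mm. A $$ (r, q*t+c))" using assms by (simp add: sum.delta')
  finally show ?thesis .
qed

lemma mult_sI: "(X::real mat) \<in> carrier_mat n t \<Longrightarrow> X * (a \<cdot>\<^sub>m 1\<^sub>m t) = a \<cdot>\<^sub>m X"
  by simp

definition blk :: "nat \<Rightarrow> (nat \<Rightarrow> nat \<Rightarrow> nat) \<Rightarrow> nat \<Rightarrow> nat list" where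
  "blk k d i = map (d i) [0..<k]"

lemma blk_seq: assumes "is_design t b k d" "i < b" shows "is_seq t k (blk k d i)"
  using assms unfolding is_seq_def is_design_def blk_def by auto

lemma blk_nth: "j < k \<Longrightarrow> blk k d i ! j = d i j"
  unfolding blk_def by simp

lemma TLR_dims[simp]:
  "T_mat t b k d \<in> carrier_mat (b*k) t" "L_mat t b k d \<in> carrier_mat (b*k) t" "R_mat t b k d \<in> carrier_mat (b*k) t"
  "block_mat b k \<in> carrier_mat (b*k) b"
  by (auto simp: T_mat_def L_mat_def R_mat_def block_mat_def)

lemma TLR_entry: assumes "i < b" "j < k" "c < t"
  shows "T_mat t b k d $$ (i*k+j, c) = ee (blk k d i ! j) c"
    "L_mat t b k d $$ (i*k+j, c) = ee (blk k d i ! ((j+k-1) mod k)) c"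
    "R_mat t b k d $$ (i*k+j, c) = ee (blk k d i ! ((j+1) mod k)) c"
proof -
  have r: "i*k+j < b*k"
  proof -
    have "i*k+j < i*k+k" using assms by simp
    also have "\<dots> = (i+1)*k" by simp
    also have "\<dots> \<le> b*k" using assms by (intro mult_right_mono) auto
    finally show ?thesis .
  qed
  have k: "0 < k" using assms by simp
  show "T_mat t b k d $$ (i*k+j, c) = ee (blk k d i ! j) c"
    using r assms by (simp add: T_mat_def ee_def blk_nth)
  show "L_mat t b k d $$ (i*k+j, c) = ee (blk k d i ! ((j+k-1) mod k)) c"
    using r assms k by (simp add: L_mat_def ee_def blk_nth)
  show "R_mat t b k d $$ (i*k+j, c) = ee (blk k d i ! ((j+1) mod k)) c"
    using r assms k by (simp add: R_mat_def ee_def blk_nth)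
qed

lemma TLR_dim2[simp]:
  "dim_row (T_mat t b k d) = b*k" "dim_col (T_mat t b k d) = t"
  "dim_row (L_mat t b k d) = b*k" "dim_col (L_mat t b k d) = t"
  "dim_row (R_mat t b k d) = b*k" "dim_col (R_mat t b k d) = t"
  by (auto simp: T_mat_def L_mat_def R_mat_def)

lemma sum2: "(\<Sum>q<(2::nat). f q) = f 0 + (f 1::real)"
  by (simp add: numeral_2_eq_2)

lemma sum3: "(\<Sum>q<(3::nat). f q) = f 0 + f 1 + (f 2::real)"
  by (simp add: numeral_3_eq_3 numeral_2_eq_2)

lemma Kd[simp]: "K_mat m t \<in> carrier_mat (m*t) t"
  unfolding K_mat_def by (rule mat_carrier)

lemma part_phi:
  assumes t: "0 < t" and b: "0 < b" and k: "0 < k" and des: "is_design t b k d"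
  and l1: "is_seq t k l1" and mx: "\<forall>l. is_seq t k l \<longrightarrow> c_fun t l \<le> c_fun t l1"
  shows "mtrace (C_phi t b k d) \<le> real b * c_fun t l1"
proof -
  define T where "T = T_mat t b k d"
  define L where "L = L_mat t b k d"
  define A where "A = hcat T L"
  have Ad: "A \<in> carrier_mat (b*k) (2*t)" unfolding A_def T_def L_def by (intro carrier_matI, simp_all)
  define Z where "Z = A * K_mat 2 t * ((1/real (2::nat)) \<cdot>\<^sub>m 1\<^sub>m t)"
  have Zd: "Z \<in> carrier_mat (b*k) t" unfolding Z_def using Ad Kd[of 2 t] by (meson mult_carrier_mat one_carrier_mat smult_carrier_mat)
  have Zent: "Z $$ (i*k+j, c) = (ee (blk k d i ! j) c + ee (blk k d i ! ((j+k-1) mod k)) c)/2"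
    if ij: "i < b" "j < k" "c < t" for i j c
  proof -
    have r: "i*k+j < b*k"
    proof -
      have "i*k+j < i*k+k" using ij by simp
      also have "\<dots> = (i+1)*k" by simp
      also have "\<dots> \<le> b*k" using ij by (intro mult_right_mono) auto
      finally show ?thesis .
    qed
    have AKd: "A * K_mat 2 t \<in> carrier_mat (b*k) t" using Ad Kd[of 2 t] by (meson mult_carrier_mat)
    have "Z = (1/real (2::nat)) \<cdot>\<^sub>m (A * K_mat 2 t)" unfolding Z_def by (rule mult_sI[OF AKd])
    then have "Z $$ (i*k+j, c) = (1/2) * (A * K_mat 2 t) $$ (i*k+j, c)" using r ij carrier_matD[OF AKd] by simp
    also have "(A * K_mat 2 t) $$ (i*k+j, c) = (\<Sum>q<2. A $$ (i*k+j, q*t+c))" by (rule AK_entry[OF Ad r ij(3)])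
    also have "\<dots> = A $$ (i*k+j, c) + A $$ (i*k+j, t+c)" by (simp only: sum2, simp)
    also have "A $$ (i*k+j, c) = T $$ (i*k+j, c)" unfolding A_def using r ij by (simp add: hcat_index T_def L_def)
    also have "A $$ (i*k+j, t+c) = L $$ (i*k+j, c)" unfolding A_def using r ij by (simp add: hcat_index T_def L_def)
    finally show ?thesis unfolding T_def L_def TLR_entry[OF ij] by simp
  qed
  have "mtrace (C_phi t b k d) \<le> mtrace (transpose_mat Z *
      (1\<^sub>m (b*k) - (1/real k) \<cdot>\<^sub>m (block_mat b k * transpose_mat (block_mat b k))) * Z)"
    unfolding C_phi_def Z_def A_def[symmetric] T_def[symmetric] L_def[symmetric]
    using info_generic[OF Ad _ k] by simp
  also have "\<dots> = (\<Sum>i<b. \<Sum>c<t. (\<Sum>j<k. (Z $$ (i*k+j,c))^2) - (1/real k) * (\<Sum>j<k. Z $$ (i*k+j,c))^2)"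
    by (rule trace_formula[OF Zd k])
  also have "\<dots> = (\<Sum>i<b. c_fun t (blk k d i))"
  proof (intro sum.cong refl)
    fix i assume i: "i \<in> {..<b}"
    have sq: "is_seq t k (blk k d i)" using blk_seq[OF des] i by auto
    have "(\<Sum>c<t. (\<Sum>j<k. (Z $$ (i*k+j,c))^2) - (1/real k) * (\<Sum>j<k. Z $$ (i*k+j,c))^2)
       = (\<Sum>c<t. (\<Sum>j<k. ((ee (blk k d i ! j) c + ee (blk k d i ! ((j+k-1) mod k)) c)/2)^2)
           - (1/real k) * (\<Sum>j<k. (ee (blk k d i ! j) c + ee (blk k d i ! ((j+k-1) mod k)) c)/2)^2)"
      using i by (intro sum.cong refl arg_cong2[where f = "\<lambda>x y. x - (1/real k) * y^2"], auto simp: Zent)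
    also have "\<dots> = c_fun t (blk k d i)"
      by (rule block_phi) (use sq k in \<open>auto simp: is_seq_def\<close>)
    finally show "(\<Sum>c<t. (\<Sum>j<k. (Z $$ (i*k+j,c))^2) - (1/real k) * (\<Sum>j<k. Z $$ (i*k+j,c))^2) = c_fun t (blk k d i)" .
  qed
  also have "\<dots> \<le> (\<Sum>i<b. c_fun t l1)"
    using mx blk_seq[OF des] by (intro sum_mono) auto
  also have "\<dots> = real b * c_fun t l1" by simp
  finally show ?thesis .
qed

lemma part_psi:
  assumes t: "0 < t" and b: "0 < b" and k: "0 < k" and des: "is_design t b k d"
  and l1: "is_seq t k l1" and mx: "\<forall>l. is_seq t k l \<longrightarrow> ctilde_fun t l \<le> ctilde_fun t l1"
  shows "mtrace (C_psi t b k d) \<le> real b * ctilde_fun t l1"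
proof -
  define T where "T = T_mat t b k d"
  define L where "L = L_mat t b k d"
  define R where "R = R_mat t b k d"
  define A where "A = hcat (hcat T L) R"
  have Ad: "A \<in> carrier_mat (b*k) (3*t)" unfolding A_def T_def L_def R_def by (intro carrier_matI, simp_all)
  define Z where "Z = A * K_mat 3 t * ((1/real (3::nat)) \<cdot>\<^sub>m 1\<^sub>m t)"
  have Zd: "Z \<in> carrier_mat (b*k) t" unfolding Z_def using Ad Kd[of 3 t] by (meson mult_carrier_mat one_carrier_mat smult_carrier_mat)
  have Zent: "Z $$ (i*k+j, c) = (ee (blk k d i ! j) c + ee (blk k d i ! ((j+k-1) mod k)) c + ee (blk k d i ! ((j+1) mod k)) c)/3"
    if ij: "i < b" "j < k" "c < t" for i j c
  proof -
    have r: "i*k+j < b*k"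
    proof -
      have "i*k+j < i*k+k" using ij by simp
      also have "\<dots> = (i+1)*k" by simp
      also have "\<dots> \<le> b*k" using ij by (intro mult_right_mono) auto
      finally show ?thesis .
    qed
    have AKd: "A * K_mat 3 t \<in> carrier_mat (b*k) t" using Ad Kd[of 3 t] by (meson mult_carrier_mat)
    have "Z = (1/real (3::nat)) \<cdot>\<^sub>m (A * K_mat 3 t)" unfolding Z_def by (rule mult_sI[OF AKd])
    then have "Z $$ (i*k+j, c) = (1/3) * (A * K_mat 3 t) $$ (i*k+j, c)" using r ij carrier_matD[OF AKd] by simp
    also have "(A * K_mat 3 t) $$ (i*k+j, c) = (\<Sum>q<3. A $$ (i*k+j, q*t+c))" by (rule AK_entry[OF Ad r ij(3)])
    also have "\<dots> = A $$ (i*k+j, c) + A $$ (i*k+j, t+c) + A $$ (i*k+j, 2*t+c)" by (simp only: sum3, simp)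
    also have "A $$ (i*k+j, c) = T $$ (i*k+j, c)" unfolding A_def using r ij by (simp add: hcat_index T_def L_def R_def)
    also have "A $$ (i*k+j, t+c) = L $$ (i*k+j, c)" unfolding A_def using r ij by (simp add: hcat_index T_def L_def R_def)
    also have "A $$ (i*k+j, 2*t+c) = R $$ (i*k+j, c)" unfolding A_def using r ij by (simp add: hcat_index T_def L_def R_def)
    finally show ?thesis unfolding T_def L_def R_def TLR_entry[OF ij] by simp
  qed
  have "mtrace (C_psi t b k d) \<le> mtrace (transpose_mat Z *
      (1\<^sub>m (b*k) - (1/real k) \<cdot>\<^sub>m (block_mat b k * transpose_mat (block_mat b k))) * Z)"
    unfolding C_psi_def Z_def A_def[symmetric] T_def[symmetric] L_def[symmetric] R_def[symmetric]
    using info_generic[OF Ad _ k] by simp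
  also have "\<dots> = (\<Sum>i<b. \<Sum>c<t. (\<Sum>j<k. (Z $$ (i*k+j,c))^2) - (1/real k) * (\<Sum>j<k. Z $$ (i*k+j,c))^2)"
    by (rule trace_formula[OF Zd k])
  also have "\<dots> = (\<Sum>i<b. ctilde_fun t (blk k d i))"
  proof (intro sum.cong refl)
    fix i assume i: "i \<in> {..<b}"
    have sq: "is_seq t k (blk k d i)" using blk_seq[OF des] i by auto
    have "(\<Sum>c<t. (\<Sum>j<k. (Z $$ (i*k+j,c))^2) - (1/real k) * (\<Sum>j<k. Z $$ (i*k+j,c))^2)
       = (\<Sum>c<t. (\<Sum>j<k. ((ee (blk k d i ! j) c + ee (blk k d i ! ((j+k-1) mod k)) c + ee (blk k d i ! ((j+1) mod k)) c)/3)^2)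
           - (1/real k) * (\<Sum>j<k. (ee (blk k d i ! j) c + ee (blk k d i ! ((j+k-1) mod k)) c + ee (blk k d i ! ((j+1) mod k)) c)/3)^2)"
      using i by (intro sum.cong refl arg_cong2[where f = "\<lambda>x y. x - (1/real k) * y^2"], auto simp: Zent)
    also have "\<dots> = ctilde_fun t (blk k d i)"
      by (rule block_psi) (use sq k in \<open>auto simp: is_seq_def\<close>)
    finally show "(\<Sum>c<t. (\<Sum>j<k. (Z $$ (i*k+j,c))^2) - (1/real k) * (\<Sum>j<k. Z $$ (i*k+j,c))^2) = ctilde_fun t (blk k d i)" .
  qed
  also have "\<dots> \<le> (\<Sum>i<b. ctilde_fun t l1)"
    using mx blk_seq[OF des] by (intro sum_mono) auto
  also have "\<dots> = real b * ctilde_fun t l1" by simp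
  finally show ?thesis .
qed

theorem proposition8:
  fixes t b k :: nat and d :: "nat \<Rightarrow> nat \<Rightarrow> nat" and l1 l2 :: "nat list"
  assumes "0 < t" and "0 < b" and "0 < k"
    and "is_design t b k d"
  shows "(is_seq t k l1 \<and> (\<forall>l. is_seq t k l \<longrightarrow> c_fun t l \<le> c_fun t l1)
            \<longrightarrow> mtrace (C_phi t b k d) \<le> real b * c_fun t l1)
       \<and> (is_seq t k l2 \<and> (\<forall>l. is_seq t k l \<longrightarrow> ctilde_fun t l \<le> ctilde_fun t l2)
            \<longrightarrow> mtrace (C_psi t b k d) \<le> real b * ctilde_fun t l2)"
  using part_phi[OF assms] part_psi[OF assms] by blast

end
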